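(* Let $G$ be a connected graph that is not a path, and let $B$ be (the vertex set of) a block of $G$ which is not a cut edge of a pendant path of $G$. Then every connected forcing set of $G$ contains at least $\delta(G[B])$ vertices of $B$.
   Context: Zero forcing: given a graph $G$ and a set $S$ of initially colored vertices, if a colored vertex $u$ has exactly one uncolored neighbor $v$, then $v$ becomes colored. $S$ is a zero forcing set if repeated application colors all vertices. A connected forcing set is a zero forcing set $S$ with $G[S]$ connected. A block is a maximal subgraph with no articulation point (cut vertex). A pendant path attached to a vertex $v$ is a set $P\subset V$ such that $G[P]$ is a path component of $G-v$, one of whose ends is adjacent to $v$ in $G$; a cut edge of a pendant path is an edge of the path $G[P\cup\{v\}]$ (a single-edge block lying on the pendant path together with the vertex it is attached to). $\delta(H)$ denotes the minimum degree of $H$. *)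

theory Defs
  imports Main
begin

definition graph :: "'a set \<Rightarrow> ('a \<Rightarrow> 'a \<Rightarrow> bool) \<Rightarrow> bool" where
  "graph V E \<longleftrightarrow> finite V \<and> (\<forall>x y. E x y \<longrightarrow> E y x) \<and> (\<forall>x. \<not> E x x)
     \<and> (\<forall>x y. E x y \<longrightarrow> x \<in> V \<and> y \<in> V)"

definition induced_connected :: "('a \<Rightarrow> 'a \<Rightarrow> bool) \<Rightarrow> 'a set \<Rightarrow> bool" where
  "induced_connected E X \<longleftrightarrow> X \<noteq> {} \<and>
     (\<forall>x\<in>X. \<forall>y\<in>X. (\<lambda>a b. a \<in> X \<and> b \<in> X \<and> E a b)\<^sup>*\<^sup>* x y)"

inductive_set forced :: "'a set \<Rightarrow> ('a \<Rightarrow> 'a \<Rightarrow> bool) \<Rightarrow> 'a set \<Rightarrow> 'a set"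
  for V E S where
  init: "v \<in> S \<Longrightarrow> v \<in> forced V E S"
| force: "\<lbrakk>u \<in> forced V E S; v \<in> V; E u v;
           \<forall>w\<in>V. E u w \<longrightarrow> w \<noteq> v \<longrightarrow> w \<in> forced V E S\<rbrakk> \<Longrightarrow> v \<in> forced V E S"

definition zero_forcing_set :: "'a set \<Rightarrow> ('a \<Rightarrow> 'a \<Rightarrow> bool) \<Rightarrow> 'a set \<Rightarrow> bool" where
  "zero_forcing_set V E S \<longleftrightarrow> S \<subseteq> V \<and> forced V E S = V"

definition connected_forcing_set :: "'a set \<Rightarrow> ('a \<Rightarrow> 'a \<Rightarrow> bool) \<Rightarrow> 'a set \<Rightarrow> bool" where
  "connected_forcing_set V E S \<longleftrightarrow> zero_forcing_set V E S \<and> induced_connected E S"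

definition path_order :: "('a \<Rightarrow> 'a \<Rightarrow> bool) \<Rightarrow> 'a set \<Rightarrow> 'a list \<Rightarrow> bool" where
  "path_order E X vs \<longleftrightarrow> vs \<noteq> [] \<and> distinct vs \<and> set vs = X \<and>
     (\<forall>x\<in>X. \<forall>y\<in>X. E x y \<longleftrightarrow> (\<exists>i. Suc i < length vs \<and> {vs ! i, vs ! Suc i} = {x, y}))"

definition is_path_graph :: "'a set \<Rightarrow> ('a \<Rightarrow> 'a \<Rightarrow> bool) \<Rightarrow> bool" where
  "is_path_graph V E \<longleftrightarrow> (\<exists>vs. path_order E V vs)"

definition no_cut_vertex :: "('a \<Rightarrow> 'a \<Rightarrow> bool) \<Rightarrow> 'a set \<Rightarrow> bool" where
  "no_cut_vertex E X \<longleftrightarrow> induced_connected E X \<and>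
     (\<forall>v\<in>X. X - {v} \<noteq> {} \<longrightarrow> induced_connected E (X - {v}))"

definition is_block :: "'a set \<Rightarrow> ('a \<Rightarrow> 'a \<Rightarrow> bool) \<Rightarrow> 'a set \<Rightarrow> bool" where
  "is_block V E B \<longleftrightarrow> B \<subseteq> V \<and> no_cut_vertex E B \<and>
     (\<forall>C. B \<subseteq> C \<longrightarrow> C \<subseteq> V \<longrightarrow> no_cut_vertex E C \<longrightarrow> C = B)"

text \<open>P is a pendant path attached to v: G[P] is a path component of G - v, one of whose ends
  is adjacent to v.\<close>
definition pendant_path :: "'a set \<Rightarrow> ('a \<Rightarrow> 'a \<Rightarrow> bool) \<Rightarrow> 'a \<Rightarrow> 'a set \<Rightarrow> bool" where
  "pendant_path V E v P \<longleftrightarrow> v \<in> V \<and> P \<subseteq> V - {v} \<and>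
     (\<forall>x\<in>P. \<forall>y\<in>V - {v}. E x y \<longrightarrow> y \<in> P) \<and>
     (\<exists>vs. path_order E P vs \<and> (E v (hd vs) \<or> E v (last vs)))"

definition cut_edge_of_pendant_path :: "'a set \<Rightarrow> ('a \<Rightarrow> 'a \<Rightarrow> bool) \<Rightarrow> 'a set \<Rightarrow> bool" where
  "cut_edge_of_pendant_path V E B \<longleftrightarrow>
     (\<exists>v P x y. pendant_path V E v P \<and> B = {x, y} \<and> x \<noteq> y \<and> E x y \<and>
        x \<in> P \<union> {v} \<and> y \<in> P \<union> {v})"

definition min_degree :: "('a \<Rightarrow> 'a \<Rightarrow> bool) \<Rightarrow> 'a set \<Rightarrow> nat" where
  "min_degree E X = Min ((\<lambda>w. card {u\<in>X. E w u}) ` X)"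

end

theory Submission
  imports Defs "HOL-Library.Transitive_Closure_Table"
begin

definition conn :: "('a \<Rightarrow> 'a \<Rightarrow> bool) \<Rightarrow> 'a set \<Rightarrow> 'a \<Rightarrow> 'a \<Rightarrow> bool" where
  "conn E X = (\<lambda>a b. a \<in> X \<and> b \<in> X \<and> E a b)\<^sup>*\<^sup>*"

lemma ic_conn: "induced_connected E X \<longleftrightarrow> X \<noteq> {} \<and> (\<forall>x\<in>X. \<forall>y\<in>X. conn E X x y)"
  unfolding induced_connected_def conn_def by simp

lemma conn_refl[simp]: "conn E X a a" unfolding conn_def by simp

lemma conn_trans: "conn E X a b \<Longrightarrow> conn E X b c \<Longrightarrow> conn E X a c" unfolding conn_def by (rule rtranclp_trans)

lemma conn_mono: "conn E X a b \<Longrightarrow> X \<subseteq> Y \<Longrightarrow> conn E Y a b"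
  unfolding conn_def by (induction rule: rtranclp_induct) (auto intro: rtranclp.rtrancl_into_rtrancl)

lemma conn_sym: "conn E X a b \<Longrightarrow> (\<forall>x y. E x y \<longrightarrow> E y x) \<Longrightarrow> conn E X b a"
  unfolding conn_def by (induction rule: rtranclp_induct) (auto intro: converse_rtranclp_into_rtranclp)

lemma conn_edge: "a \<in> X \<Longrightarrow> b \<in> X \<Longrightarrow> E a b \<Longrightarrow> conn E X a b"
  unfolding conn_def by auto

lemma conn_step_start: "E a b \<Longrightarrow> a \<in> X \<Longrightarrow> b \<in> X \<Longrightarrow> conn E X b c \<Longrightarrow> conn E X a c"
  unfolding conn_def by (rule converse_rtranclp_into_rtranclp) auto


lemma first_exit:
  assumes "conn E X p q" "p \<in> Y" "q \<notin> Y"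
  shows "\<exists>y z. conn E (X \<inter> Y) p y \<and> y \<in> X \<inter> Y \<and> z \<in> X - Y \<and> E y z"
  using assms(1)[unfolded conn_def] assms(2,3)
proof (induction rule: converse_rtranclp_induct)
  case base then show ?case by simp
next
  case (step p p1)
  show ?case
  proof (cases "p1 \<in> Y")
    case True
    then obtain y z where c: "conn E (X \<inter> Y) p1 y" "y \<in> X \<inter> Y" "z \<in> X - Y" "E y z" using step by blast
    have "conn E (X \<inter> Y) p y" 
      by (rule conn_step_start[OF _ _ _ c(1)]) (use step True in auto)
    then show ?thesis using c by blast
  next
    case False then show ?thesis using step by (intro exI[of _ p] exI[of _ p1]) auto
  qed
qed

lemma ic_intro:
  assumes "c \<in> C" "\<forall>x\<in>C. conn E C x c" "\<forall>x y. E x y \<longrightarrow> E y x"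
  shows "induced_connected E C"
  unfolding ic_conn
proof (intro conjI ballI)
  show "C \<noteq> {}" using assms(1) by blast
  fix x y assume "x \<in> C" "y \<in> C"
  show "conn E C x y"
    using conn_trans[OF bspec[OF assms(2) \<open>x \<in> C\<close>] conn_sym[OF bspec[OF assms(2) \<open>y \<in> C\<close>] assms(3)]] .
qed

lemma path_set: "rtrancl_path R x xs y \<Longrightarrow> (\<And>a b. R a b \<Longrightarrow> a \<in> X \<and> b \<in> X) \<Longrightarrow> x \<in> X \<Longrightarrow> set xs \<subseteq> X"
  by (induction rule: rtrancl_path.induct) auto

lemma path_last_in: "rtrancl_path R x xs y \<Longrightarrow> y \<in> set (x#xs)"
  by (induction rule: rtrancl_path.induct) auto

lemma path_conn_end: "rtrancl_path E x xs y \<Longrightarrow> z \<in> set (x#xs) \<Longrightarrow> conn E (set (x#xs)) z y"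
proof (induction arbitrary: z rule: rtrancl_path.induct)
  case (base x) thus ?case by simp
next
  case (step x x1 xs y)
  have h: "conn E (set (x # x1 # xs)) x1 y"
    using conn_mono[OF step.IH[of x1], of "set (x # x1 # xs)"] by auto
  show ?case
  proof (cases "z = x")
    case True
    have "conn E (set (x # x1 # xs)) x x1" using step.hyps(1) by (intro conn_edge) auto
    then show ?thesis using h True by (meson conn_trans)
  next
    case False
    then have "z \<in> set (x1#xs)" using step.prems by auto
    then show ?thesis using conn_mono[OF step.IH[of z], of "set (x # x1 # xs)"] by auto
  qed
qed

lemma path_conn_start: "rtrancl_path E x xs y \<Longrightarrow> z \<in> set (x#xs) \<Longrightarrow> conn E (set (x#xs)) x z"
proof (induction arbitrary: z rule: rtrancl_path.induct)
  case (base x) thus ?case by simp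
next
  case (step x x1 xs y)
  have e: "conn E (set (x # x1 # xs)) x x1" using step.hyps(1) by (intro conn_edge) auto
  show ?case
  proof (cases "z = x")
    case True
    then show ?thesis by simp
  next
    case False
    then have "z \<in> set (x1#xs)" using step.prems by auto
    then have "conn E (set (x # x1 # xs)) x1 z" using conn_mono[OF step.IH[of z], of "set (x # x1 # xs)"] by auto
    then show ?thesis using e by (meson conn_trans)
  qed
qed

lemma path_remove:
  assumes "rtrancl_path E x xs y" "distinct (x#xs)" "z \<in> set (x#xs)" "z \<noteq> v"
    "\<forall>a b. E a b \<longrightarrow> E b a"
  shows "(x \<noteq> v \<and> conn E (set (x#xs) - {v}) z x) \<or> (y \<noteq> v \<and> conn E (set (x#xs) - {v}) z y)"
  using assms
proof (induction arbitrary: z rule: rtrancl_path.induct)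
  case (base x) thus ?case by simp
next
  case (step x x1 xs y)
  show ?case
  proof (cases "z = x")
    case True 
    then have "x \<noteq> v" using step.prems by simp
    then show ?thesis using True by (intro disjI1 conjI) simp_all
  next
    case zx: False
    then have zin: "z \<in> set (x1#xs)" using step.prems by auto
    show ?thesis
    proof (cases "v = x")
      case True
      have c: "conn E (set (x1#xs)) z y" using path_conn_end[OF step.hyps(2) zin] .
      have s: "set (x1#xs) \<subseteq> set (x#x1#xs) - {v}" using True step.prems(1) by auto
      have "y \<in> set (x1#xs)" using path_last_in[OF step.hyps(2)] .
      then have "y \<noteq> v" using s by auto
      then show ?thesis using conn_mono[OF c s] by (intro disjI2 conjI)
    next
      case vx: False
      have sub: "set (x1#xs) - {v} \<subseteq> set (x#x1#xs) - {v}" by auto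
      have "(x1 \<noteq> v \<and> conn E (set (x1#xs) - {v}) z x1) \<or> (y \<noteq> v \<and> conn E (set (x1#xs) - {v}) z y)"
        using step.IH[OF _ zin step.prems(3) step.prems(4)] step.prems(1) by auto
      then show ?thesis
      proof
        assume a: "x1 \<noteq> v \<and> conn E (set (x1#xs) - {v}) z x1"
        have c1: "conn E (set (x#x1#xs) - {v}) z x1" using conn_mono[OF conjunct2[OF a] sub] .
        have "E x1 x" using step.hyps(1) step.prems(4) by blast
        then have c2: "conn E (set (x#x1#xs) - {v}) x1 x" using a vx by (intro conn_edge) auto
        have xv: "x \<noteq> v" using vx by simp
        show ?thesis using conn_trans[OF c1 c2] xv by (intro disjI1 conjI)
      next
        assume a: "y \<noteq> v \<and> conn E (set (x1#xs) - {v}) z y"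
        show ?thesis by (rule disjI2) (rule conjI[OF conjunct1[OF a] conn_mono[OF conjunct2[OF a] sub]])
      qed
    qed
  qed
qed

lemma conn_step_end: "conn E X a b \<Longrightarrow> b \<in> X \<Longrightarrow> c \<in> X \<Longrightarrow> E b c \<Longrightarrow> conn E X a c"
  unfolding conn_def by (rule rtranclp.rtrancl_into_rtrancl) auto

lemma block_attach:
  assumes G: "graph V E" and B: "is_block V E B"
    and x: "x \<in> V - B" and y: "y \<in> V - B" and c: "conn E (V - B) x y"
    and w1: "w1 \<in> B" "E x w1" and w2: "w2 \<in> B" "E y w2"
  shows "w1 = w2"
proof (rule ccontr)
  assume ne: "w1 \<noteq> w2"
  have sym: "\<forall>a b. E a b \<longrightarrow> E b a" using G by (simp add: graph_def)
  obtain xs0 where "rtrancl_path (\<lambda>a b. a \<in> V - B \<and> b \<in> V - B \<and> E a b) x xs0 y"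
    using c rtranclp_eq_rtrancl_path unfolding conn_def by metis
  then obtain xs where p0: "rtrancl_path (\<lambda>a b. a \<in> V - B \<and> b \<in> V - B \<and> E a b) x xs y" 
    and dist: "distinct (x#xs)"
    by (rule rtrancl_path_distinct)
  have pE: "rtrancl_path E x xs y" using rtrancl_path_mono[OF p0] by blast
  have setp: "set (x#xs) \<subseteq> V - B" using path_set[OF p0, of "V - B"] x by auto
  define p where "p = set (x#xs)"
  define C where "C = B \<union> p"
  have BV: "B \<subseteq> V" and ncB: "no_cut_vertex E B" 
    and maxB: "\<And>C. B \<subseteq> C \<Longrightarrow> C \<subseteq> V \<Longrightarrow> no_cut_vertex E C \<Longrightarrow> C = B"
    using B unfolding is_block_def by blast+
  have icB: "induced_connected E B" and icBv: "\<And>v. v\<in>B \<Longrightarrow> B - {v} \<noteq> {} \<Longrightarrow> induced_connected E (B - {v})"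
    using ncB unfolding no_cut_vertex_def by blast+
  have Bconn: "\<And>z w. z \<in> B \<Longrightarrow> w \<in> B \<Longrightarrow> conn E B z w" using icB unfolding ic_conn by blast
  have xp: "x \<in> p" "y \<in> p" using path_last_in[OF pE] p_def by auto
  have pB: "p \<inter> B = {}" using setp p_def by auto
  have toy: "\<And>z. z\<in>p \<Longrightarrow> conn E p z y" using path_conn_end[OF pE] p_def by blast
  have tox: "\<And>z. z\<in>p \<Longrightarrow> conn E p z x" 
  proof -
    fix z assume "z \<in> p"
    then have "conn E p x z" using path_conn_start[OF pE] p_def by blast
    then show "conn E p z x" using conn_sym sym by metis
  qed
  have "no_cut_vertex E C"
    unfolding no_cut_vertex_def
  proof (intro conjI ballI impI)
    show "induced_connected E C"
    proof (rule ic_intro[of w1])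
      show "w1 \<in> C" using w1 C_def by simp
      show "\<forall>a b. E a b \<longrightarrow> E b a" using sym .
      show "\<forall>z\<in>C. conn E C z w1"
      proof
        fix z assume "z \<in> C"
        then consider "z \<in> B" | "z \<in> p" using C_def by blast
        then show "conn E C z w1"
        proof cases
          case 1 show ?thesis using conn_mono[OF Bconn[OF 1 w1(1)]] C_def by blast
        next
          case 2 
          have "conn E C z x" using conn_mono[OF tox[OF 2]] C_def by blast
          then show ?thesis using conn_step_end[of E C z x w1] xp w1 C_def by blast
        qed
      qed
    qed
  next
    fix v assume vC: "v \<in> C" and nemp: "C - {v} \<noteq> {}"
    have sub1: "p \<subseteq> C - {v}" if "v \<in> B" using that pB C_def by blast
    show "induced_connected E (C - {v})"
    proof (cases "v \<in> B")
      case vB: True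
      show ?thesis
      proof (cases "v = w1")
        case False
        have ic: "induced_connected E (B - {v})" using icBv[OF vB] False w1 by blast
        show ?thesis
        proof (rule ic_intro[of w1])
          show "w1 \<in> C - {v}" using w1 C_def False by simp
          show "\<forall>a b. E a b \<longrightarrow> E b a" using sym .
          show "\<forall>z\<in>C - {v}. conn E (C - {v}) z w1"
          proof
            fix z assume zC: "z \<in> C - {v}"
            then consider "z \<in> B - {v}" | "z \<in> p" using C_def by blast
            then show "conn E (C - {v}) z w1"
            proof cases
              case 1 
              have "conn E (B - {v}) z w1" using ic 1 w1 False unfolding ic_conn by blast
              moreover have "B - {v} \<subseteq> C - {v}" using C_def by blast
              ultimately show ?thesis by (rule conn_mono)
            next
              case 2 
              have "conn E (C - {v}) z x" using conn_mono[OF tox[OF 2] sub1[OF vB]] .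
              then show ?thesis using conn_step_end[of E "C - {v}" z x w1] xp w1 C_def False sub1[OF vB] by blast
            qed
          qed
        qed
      next
        case True
        then have F: "v \<noteq> w2" using ne by simp
        have ic: "induced_connected E (B - {v})" using icBv[OF vB] F w2 by blast
        show ?thesis
        proof (rule ic_intro[of w2])
          show "w2 \<in> C - {v}" using w2 C_def F by simp
          show "\<forall>a b. E a b \<longrightarrow> E b a" using sym .
          show "\<forall>z\<in>C - {v}. conn E (C - {v}) z w2"
          proof
            fix z assume zC: "z \<in> C - {v}"
            then consider "z \<in> B - {v}" | "z \<in> p" using C_def by blast
            then show "conn E (C - {v}) z w2"
            proof cases
              case 1 
              have "conn E (B - {v}) z w2" using ic 1 w2 F unfolding ic_conn by blast
              moreover have "B - {v} \<subseteq> C - {v}" using C_def by blast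
              ultimately show ?thesis by (rule conn_mono)
            next
              case 2 
              have "conn E (C - {v}) z y" using conn_mono[OF toy[OF 2] sub1[OF vB]] .
              then show ?thesis using conn_step_end[of E "C - {v}" z y w2] xp w2 C_def F sub1[OF vB] by blast
            qed
          qed
        qed
      qed
    next
      case vnB: False
      then have vp: "v \<in> p" using vC C_def by blast
      have BC: "B \<subseteq> C - {v}" using vnB C_def by blast
      have w1v: "w1 \<noteq> v" "w2 \<noteq> v" using vnB w1 w2 by auto
      show ?thesis
      proof (rule ic_intro[of w1])
        show "w1 \<in> C - {v}" using BC w1 by blast
        show "\<forall>a b. E a b \<longrightarrow> E b a" using sym .
        show "\<forall>z\<in>C - {v}. conn E (C - {v}) z w1"
        proof
          fix z assume zC: "z \<in> C - {v}"
          then consider "z \<in> B" | "z \<in> p - {v}" using C_def by blast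
          then show "conn E (C - {v}) z w1"
          proof cases
            case 1 
            show ?thesis using conn_mono[OF Bconn[OF 1 w1(1)] BC] .
          next
            case 2
            have ps: "p - {v} \<subseteq> C - {v}" using C_def by blast
            have "z \<in> set (x#xs)" "z \<noteq> v" using 2 p_def by auto
            from path_remove[OF pE dist this sym]
            have "(x \<noteq> v \<and> conn E (p - {v}) z x) \<or> (y \<noteq> v \<and> conn E (p - {v}) z y)"
              unfolding p_def .
            then show ?thesis
            proof
              assume a: "x \<noteq> v \<and> conn E (p - {v}) z x"
              have "conn E (C - {v}) z x" using conn_mono[OF conjunct2[OF a] ps] .
              then show ?thesis using conn_step_end[of E "C - {v}" z x w1] a xp w1 w1v C_def by blast
            next
              assume a: "y \<noteq> v \<and> conn E (p - {v}) z y"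
              have "conn E (C - {v}) z y" using conn_mono[OF conjunct2[OF a] ps] .
              then have "conn E (C - {v}) z w2" using conn_step_end[of E "C - {v}" z y w2] a xp w2 w1v C_def by blast
              moreover have "conn E (C - {v}) w2 w1" using conn_mono[OF Bconn[OF w2(1) w1(1)] BC] .
              ultimately show ?thesis by (rule conn_trans)
            qed
          qed
        qed
      qed
    qed
  qed
  moreover have "B \<subseteq> C" "C \<subseteq> V" using C_def p_def setp BV by auto
  ultimately have "C = B" using maxB by blast
  then show False using xp C_def pB by blast
qed

inductive_set forced0 :: "'a set \<Rightarrow> ('a \<Rightarrow> 'a \<Rightarrow> bool) \<Rightarrow> 'a set \<Rightarrow> 'a set \<Rightarrow> 'a set"
  for V E B S where
  init0: "v \<in> S \<Longrightarrow> v \<in> forced0 V E B S"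
| force0: "\<lbrakk>u \<in> forced0 V E B S; u \<notin> B; v \<in> V; E u v;
           \<forall>w\<in>V. E u w \<longrightarrow> w \<noteq> v \<longrightarrow> w \<in> forced0 V E B S\<rbrakk> \<Longrightarrow> v \<in> forced0 V E B S"

lemma md_le:
  assumes "finite B" "w \<in> B"
  shows "min_degree E B \<le> card {u\<in>B. E w u}"
  unfolding min_degree_def using assms by (auto intro!: Min_le)

lemma lemA:
  assumes G: "graph V E" and BV: "B \<subseteq> V" and Bne: "B \<noteq> {}" and Z: "forced V E S = V"
  shows "min_degree E B \<le> card (forced0 V E B S \<inter> B)"
proof -
  let ?F = "forced0 V E B S"
  have fin: "finite V" using G graph_def by auto
  have finB: "finite B" using BV fin finite_subset by auto
  show ?thesis
  proof (cases "\<exists>u v. u \<in> ?F \<and> u \<in> B \<and> v \<in> V \<and> v \<notin> ?F \<and> E u v \<and> (\<forall>w\<in>V. E u w \<longrightarrow> w \<noteq> v \<longrightarrow> w \<in> ?F)")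
    case True
    then obtain u v where u: "u \<in> ?F" "u \<in> B" and v: "v \<in> V" "v \<notin> ?F" "E u v" 
      and oth: "\<forall>w\<in>V. E u w \<longrightarrow> w \<noteq> v \<longrightarrow> w \<in> ?F" by blast
    let ?N = "{x\<in>B. E u x}"
    have sub: "insert u (?N - {v}) \<subseteq> ?F \<inter> B" using u oth BV by auto
    have nin: "u \<notin> ?N - {v}" using G unfolding graph_def by auto
    have finN: "finite ?N" using finB by auto
    have "card (insert u (?N - {v})) \<le> card (?F \<inter> B)"
      using sub finB by (intro card_mono) auto
    then have "card (?N - {v}) + 1 \<le> card (?F \<inter> B)"
      using nin finN by simp
    moreover have "card ?N \<le> card (?N - {v}) + 1"
      using finN by (cases "v \<in> ?N") (auto simp: card_Diff_singleton)
    ultimately show ?thesis using md_le[OF finB u(2), of E] by linarith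
  next
    case False
    have "x \<in> ?F" if "x \<in> forced V E S" for x
      using that
    proof (induction rule: forced.induct)
      case (init v) thus ?case by (rule forced0.init0)
    next
      case (force u v)
      show ?case
      proof (cases "u \<in> B")
        case True
        show ?thesis using False force True by blast
      next
        case nB: False
        show ?thesis by (rule forced0.force0[OF _ nB]) (use force in auto)
      qed
    qed
    then have "B \<subseteq> ?F" using Z BV by auto
    then have "?F \<inter> B = B" by auto
    moreover obtain w where w: "w \<in> B" using Bne by auto
    moreover have "card {u\<in>B. E w u} \<le> card B" using finB by (intro card_mono) auto
    ultimately show ?thesis using md_le[OF finB w, of E] by simp
  qed
qed

lemma lemInv:
  assumes SV: "S \<subseteq> V"
  shows "forced0 V E B S \<subseteq> S \<union> {x \<in> V - B. \<exists>s\<in>S - B. conn E (V - B) s x}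
     \<union> {w \<in> B. \<exists>u \<in> V - B. (\<exists>s\<in>S - B. conn E (V - B) s u) \<and> E u w}"
proof
  fix x assume "x \<in> forced0 V E B S"
  then show "x \<in> S \<union> {x \<in> V - B. \<exists>s\<in>S - B. conn E (V - B) s x}
     \<union> {w \<in> B. \<exists>u \<in> V - B. (\<exists>s\<in>S - B. conn E (V - B) s u) \<and> E u w}"
  proof (induction rule: forced0.induct)
    case (init0 v) thus ?case by simp
  next
    case (force0 u v)
    have uR: "u \<in> V - B \<and> (\<exists>s\<in>S - B. conn E (V - B) s u)"
    proof (cases "u \<in> S")
      case True
      then show ?thesis using SV force0.hyps(2) by (intro conjI bexI[of _ u]) auto
    next
      case False
      then show ?thesis using force0.IH force0.hyps(2) by auto
    qed
    show ?case
    proof (cases "v \<in> B")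
      case True
      then show ?thesis using uR force0.hyps(4) by blast
    next
      case False
      then obtain s where s: "s \<in> S - B" "conn E (V - B) s u" using uR by blast
      have "conn E (V - B) s v" using conn_step_end[OF s(2)] uR False force0.hyps(3,4) by blast
      then show ?thesis using s(1) False force0.hyps(3) by blast
    qed
  qed
qed

lemma att_S:
  assumes G: "graph V E" and Bb: "is_block V E B" and SV: "S \<subseteq> V" and icS: "induced_connected E S"
    and b: "b \<in> S \<inter> B" and u: "u \<in> V - B" and s: "s \<in> S - B" and cu: "conn E (V - B) s u"
    and uw: "E u w" and w: "w \<in> B"
  shows "w \<in> S"
proof -
  have sym: "\<forall>a b. E a b \<longrightarrow> E b a" using G by (simp add: graph_def)
  have "conn E S s b" using icS s b unfolding ic_conn by blast
  from first_exit[OF this, of "V - B"] s b SV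
  obtain y z where yz: "conn E (S \<inter> (V - B)) s y" "y \<in> S \<inter> (V - B)" "z \<in> S - (V - B)" "E y z"
    by auto
  have "conn E (V - B) s y" using conn_mono[OF yz(1)] by blast
  then have "conn E (V - B) u y" by (rule conn_trans[OF conn_sym[OF cu sym]])
  moreover have "z \<in> B" using yz(3) SV by auto
  ultimately have "w = z" using block_attach[OF G Bb u _ _ w uw _ yz(4)] yz(2) by blast
  then show ?thesis using yz(3) by simp
qed

lemma att_unique:
  assumes G: "graph V E" and Bb: "is_block V E B" and SV: "S \<subseteq> V" and icS: "induced_connected E S"
    and SB: "S \<inter> B = {}"
    and u1: "u1 \<in> V - B" and s1: "s1 \<in> S" and c1: "conn E (V - B) s1 u1" and e1: "E u1 w1" and w1: "w1 \<in> B"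
    and u2: "u2 \<in> V - B" and s2: "s2 \<in> S" and c2: "conn E (V - B) s2 u2" and e2: "E u2 w2" and w2: "w2 \<in> B"
  shows "w1 = w2"
proof -
  have sym: "\<forall>a b. E a b \<longrightarrow> E b a" using G by (simp add: graph_def)
  have "conn E S s1 s2" using icS s1 s2 unfolding ic_conn by blast
  moreover have "S \<subseteq> V - B" using SV SB by auto
  ultimately have "conn E (V - B) s1 s2" by (rule conn_mono)
  then have "conn E (V - B) u1 u2" using conn_trans[OF conn_trans[OF conn_sym[OF c1 sym]] c2] by blast
  then show ?thesis using block_attach[OF G Bb u1 u2 _ w1 e1 w2 e2] by blast
qed

lemma deg1:
  assumes G: "graph V E" and Bb: "is_block V E B" and d: "min_degree E B = 1"
  shows "\<exists>a b. B = {a,b} \<and> a \<noteq> b \<and> E a b"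
proof -
  have BV: "B \<subseteq> V" and ncB: "no_cut_vertex E B" using Bb unfolding is_block_def by blast+
  have finB: "finite B" using BV G unfolding graph_def using finite_subset by blast
  have Bne: "B \<noteq> {}" using ncB unfolding no_cut_vertex_def induced_connected_def by blast
  have "min_degree E B \<in> (\<lambda>w. card {u\<in>B. E w u}) ` B"
    unfolding min_degree_def using finB Bne by (intro Min_in) auto
  then obtain w where w: "w \<in> B" "card {u\<in>B. E w u} = 1" using d by auto
  then obtain u where N: "{x\<in>B. E w x} = {u}" using card_1_singletonE[OF w(2)] by blast
  then have u: "u \<in> B" "E w u" by auto
  then have uw: "u \<noteq> w" using G unfolding graph_def by auto
  have "B \<subseteq> {w, u}"
  proof
    fix z assume z: "z \<in> B"
    show "z \<in> {w, u}"
    proof (rule ccontr)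
      assume nz: "z \<notin> {w, u}"
      have ncB2: "\<forall>v\<in>B. B - {v} \<noteq> {} \<longrightarrow> induced_connected E (B - {v})" using ncB unfolding no_cut_vertex_def by simp
      have ne: "B - {u} \<noteq> {}" using w(1) uw by auto
      have "induced_connected E (B - {u})" using ncB2 u(1) ne by simp
      then have a: "\<forall>x\<in>B - {u}. \<forall>y\<in>B - {u}. conn E (B - {u}) x y" unfolding ic_conn by simp
      have "w \<in> B - {u}" "z \<in> B - {u}" using w(1) z nz uw by auto
      then have "conn E (B - {u}) w z" using a by simp
      from first_exit[OF this, of "{w}"] nz
      obtain y z' where "y \<in> (B - {u}) \<inter> {w}" "z' \<in> (B - {u}) - {w}" "E y z'" by auto
      then have "z' \<in> {x\<in>B. E w x}" "z' \<noteq> u" by auto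
      then show False using N by auto
    qed
  qed
  then have "B = {w, u}" using w(1) u(1) by auto
  then show ?thesis using uw u(2) by blast
qed

lemma reach_attach:
  assumes G: "graph V E" and Bab: "B = {a,b}" and s: "s \<in> V - B" and c: "conn E (V - {b}) a s"
  shows "\<exists>y \<in> V - B. conn E (V - B) s y \<and> E y a"
proof -
  have sym: "\<forall>a b. E a b \<longrightarrow> E b a" using G by (simp add: graph_def)
  have "conn E (V - {b}) s a" using conn_sym[OF c sym] .
  from first_exit[OF this, of "V - B"] s Bab
  obtain y z where yz: "conn E ((V - {b}) \<inter> (V - B)) s y" "y \<in> (V - {b}) \<inter> (V - B)" 
    "z \<in> (V - {b}) - (V - B)" "E y z" by auto
  have eq: "(V - {b}) \<inter> (V - B) = V - B" using Bab by auto
  have "z = a" using yz(3) Bab by auto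
  then show ?thesis using yz eq by auto
qed

lemma sides:
  assumes G: "graph V E" and Bb: "is_block V E B" and Bab: "B = {a,b}" and ab: "a \<noteq> b"
    and SV: "S \<subseteq> V" and icS: "induced_connected E S" and SB: "S \<inter> B = {}"
  shows "S \<inter> {x \<in> V - {b}. conn E (V - {b}) a x} = {} \<or> S \<inter> {x \<in> V - {a}. conn E (V - {a}) b x} = {}"
proof (rule ccontr)
  assume "\<not> ?thesis"
  then obtain s1 s2 where s1: "s1 \<in> S" "conn E (V - {b}) a s1" and s2: "s2 \<in> S" "conn E (V - {a}) b s2" by blast
  have sym: "\<forall>a b. E a b \<longrightarrow> E b a" using G by (simp add: graph_def)
  have s1V: "s1 \<in> V - B" "s2 \<in> V - B" using s1 s2 SV SB by auto
  obtain y1 where y1: "y1 \<in> V - B" "conn E (V - B) s1 y1" "E y1 a" using reach_attach[OF G Bab s1V(1) s1(2)] by blast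
  have Bba: "B = {b, a}" using Bab by auto
  obtain y2 where y2: "y2 \<in> V - B" "conn E (V - B) s2 y2" "E y2 b" using reach_attach[OF G Bba s1V(2) s2(2)] by blast
  have "conn E S s1 s2" using icS s1 s2 unfolding ic_conn by blast
  moreover have "S \<subseteq> V - B" using SV SB by auto
  ultimately have "conn E (V - B) s1 s2" by (rule conn_mono)
  then have "conn E (V - B) y1 y2" using conn_trans[OF conn_trans[OF conn_sym[OF y1(2) sym]] y2(2)] by blast
  then have "a = b" using block_attach[OF G Bb y1(1) y2(1) _ _ y1(3) _ y2(3)] Bab by blast
  then show False using ab by simp
qed

lemma take_distinct_notin:
  assumes "distinct L" "j < length L" "i < j"
  shows "L ! j \<notin> set (take (Suc i) L)"
proof
  assume "L ! j \<in> set (take (Suc i) L)"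
  then obtain k where k: "k < length (take (Suc i) L)" "take (Suc i) L ! k = L ! j" 
    by (auto simp: in_set_conv_nth)
  then have "k \<le> i" "k < length L" by auto
  moreover have "L ! k = L ! j" using k by auto
  ultimately show False using assms nth_eq_iff_index_eq by fastforce
qed

lemma pendant:
  assumes G: "graph V E" and Bb: "is_block V E B" and Bab: "B = {a,b}" and ab: "a \<noteq> b" and Eab: "E a b"
    and SV: "S \<subseteq> V" and Z: "forced V E S = V"
    and SP: "S \<inter> {x \<in> V - {b}. conn E (V - {b}) a x} = {}"
  shows "cut_edge_of_pendant_path V E B"
proof -
  define P where "P = {x \<in> V - {b}. conn E (V - {b}) a x}"
  have sym: "\<forall>x y. E x y \<longrightarrow> E y x" and irr: "\<forall>x. \<not> E x x" 
    and inV: "\<forall>x y. E x y \<longrightarrow> x \<in> V \<and> y \<in> V" and finV: "finite V"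
    using G unfolding graph_def by auto
  have aV: "a \<in> V" and bV: "b \<in> V" using inV Eab by auto
  have aP: "a \<in> P" using aV ab P_def by simp
  have PV: "P \<subseteq> V - {b}" using P_def by auto
  have finP: "finite P" using PV finV finite_subset by blast
  have clos: "\<And>x y. x \<in> P \<Longrightarrow> y \<in> V - {b} \<Longrightarrow> E x y \<Longrightarrow> y \<in> P"
  proof -
    fix x y assume xy: "x \<in> P" "y \<in> V - {b}" "E x y"
    then have "conn E (V - {b}) a y" using P_def conn_step_end[of E "V - {b}" a x y] by auto
    then show "y \<in> P" using P_def xy(2) by simp
  qed
  have nb: "\<And>v. v \<in> P \<Longrightarrow> v \<noteq> a \<Longrightarrow> \<not> E b v"
  proof
    fix v assume v: "v \<in> P" "v \<noteq> a" "E b v"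
    have vVB: "v \<in> V - B" using v P_def Bab by auto
    have "conn E (V - {b}) a v" using v P_def by simp
    from reach_attach[OF G Bab vVB this] obtain y where y: "y \<in> V - B" "conn E (V - B) v y" "E y a" by blast
    have Evb: "E v b" using v(3) sym by blast
    have "a \<in> B" "b \<in> B" using Bab by auto
    from block_attach[OF G Bb y(1) vVB conn_sym[OF y(2) sym] this(1) y(3) this(2) Evb]
    show False using ab by simp
  qed
  define good where "good = (\<lambda>L. L \<noteq> [] \<and> hd L = a \<and> distinct L \<and> set L \<subseteq> P \<and>
      (\<forall>i. Suc i < length L \<longrightarrow> {w\<in>P. E (L!i) w} - set (take (Suc i) L) = {L!Suc i}))"
  have g0: "good [a]" using aP by (simp add: good_def)
  have bnd: "\<forall>L. good L \<longrightarrow> length L < card P + 1"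
  proof (intro allI impI)
    fix L assume "good L"
    then have "distinct L" "set L \<subseteq> P" by (auto simp: good_def)
    then have "length L \<le> card P" using finP by (metis card_mono distinct_card)
    then show "length L < card P + 1" by simp
  qed
  obtain L where gL: "good L" and mx: "\<And>L'. good L' \<Longrightarrow> length L' \<le> length L"
    using Lattices_Big.ex_has_greatest_nat[of good "[a]" length "card P + 1", OF g0 bnd] by blast
  have Lne: "L \<noteq> []" and hdL: "hd L = a" and dist: "distinct L" and LP: "set L \<subseteq> P"
    and step: "\<And>i. Suc i < length L \<Longrightarrow> {w\<in>P. E (L!i) w} - set (take (Suc i) L) = {L!Suc i}"
    using gL by (auto simp: good_def)
  have aL: "a \<in> set L" using Lne hdL hd_in_set by fastforce
  have T: "x \<in> (V - P) \<union> set L" if "x \<in> forced V E S" for x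
    using that
  proof (induction rule: forced.induct)
    case (init v) thus ?case using SV SP P_def by auto
  next
    case (force u v)
    show ?case
    proof (rule ccontr)
      assume nv: "v \<notin> (V - P) \<union> set L"
      then have vP: "v \<in> P" "v \<notin> set L" using force by auto
      have oth: "\<And>w. w \<in> V \<Longrightarrow> E u w \<Longrightarrow> w \<noteq> v \<Longrightarrow> w \<in> (V - P) \<union> set L" 
        using force by blast
      show False
      proof (cases "u \<in> P")
        case False
        have uV: "u \<in> V" using inV force by blast
        show False
        proof (cases "u = b")
          case True
          have "v \<noteq> a" using vP(2) aL by auto
          then show False using nb[OF vP(1)] True force by auto
        next
          case ub: False
          have "E v u" using sym force by blast
          then have "u \<in> P" using clos[OF vP(1)] uV ub by blast
          then show False using False by simp
        qed
      next
        case True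
        then have "u \<in> set L" using force by auto
        then obtain i where i: "i < length L" "L ! i = u" by (auto simp: in_set_conv_nth)
        show False
        proof (cases "Suc i < length L")
          case True
          have "set (take (Suc i) L) \<subseteq> set L" by (rule set_take_subset)
          then have "v \<in> {w\<in>P. E (L!i) w} - set (take (Suc i) L)" using vP force i by auto
          then have "v = L ! Suc i" using step[OF True] by auto
          then show False using vP(2) True nth_mem by metis
        next
          case False
          then have iL: "Suc i = length L" using i by simp
          define L' where "L' = L @ [v]"
          have "good L'" unfolding good_def
          proof (intro conjI allI impI)
            show "L' \<noteq> []" by (simp add: L'_def)
            show "hd L' = a" using Lne hdL by (simp add: L'_def)
            show "distinct L'" using dist vP by (simp add: L'_def)
            show "set L' \<subseteq> P" using LP vP by (simp add: L'_def)
            fix j assume j: "Suc j < length L'"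
            show "{w\<in>P. E (L'!j) w} - set (take (Suc j) L') = {L'!Suc j}"
            proof (cases "Suc j < length L")
              case True
              then have "L'!j = L!j" "L'!Suc j = L!Suc j" "take (Suc j) L' = take (Suc j) L" 
                by (auto simp: L'_def nth_append)
              then show ?thesis using step True by simp
            next
              case False
              then have jj: "j = i" using j iL by (simp add: L'_def)
              have e: "L'!j = u" "L'!Suc j = v" "take (Suc j) L' = L" using jj i iL by (auto simp: L'_def nth_append)
              have "{w\<in>P. E u w} - set L = {v}"
              proof
                show "{v} \<subseteq> {w\<in>P. E u w} - set L" using vP force by auto
                show "{w\<in>P. E u w} - set L \<subseteq> {v}"
                proof
                  fix w assume w: "w \<in> {w\<in>P. E u w} - set L"
                  show "w \<in> {v}"
                  proof (rule ccontr)
                    assume "w \<notin> {v}"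
                    then have "w \<in> (V - P) \<union> set L" using oth w PV by auto
                    then show False using w by auto
                  qed
                qed
              qed
              then show ?thesis using e by simp
            qed
          qed
          then show False using mx[of L'] L'_def by simp
        qed
      qed
    qed
  qed
  have PL: "P \<subseteq> set L"
  proof
    fix x assume "x \<in> P"
    then have "x \<in> forced V E S" using Z PV by auto
    then show "x \<in> set L" using T \<open>x \<in> P\<close> by blast
  qed
  have setL: "set L = P" using PL LP by auto
  have po: "path_order E P L" unfolding path_order_def
  proof (intro conjI ballI)
    show "L \<noteq> []" "distinct L" "set L = P" using Lne dist setL by auto
    fix x y assume x: "x \<in> P" and y: "y \<in> P"
    show "E x y \<longleftrightarrow> (\<exists>i. Suc i < length L \<and> {L ! i, L ! Suc i} = {x, y})"
    proof
      assume "\<exists>i. Suc i < length L \<and> {L ! i, L ! Suc i} = {x, y}"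
      then obtain i where i: "Suc i < length L" "{L!i, L!Suc i} = {x,y}" by blast
      have "L!Suc i \<in> {w\<in>P. E (L!i) w}" using step[OF i(1)] by blast
      then have e: "E (L!i) (L!Suc i)" by simp
      from i(2) have "(L!i = x \<and> L!Suc i = y) \<or> (L!i = y \<and> L!Suc i = x)" by (auto simp: doubleton_eq_iff)
      then show "E x y" using e sym by auto
    next
      assume exy: "E x y"
      obtain i where i: "i < length L" "L!i = x" using x setL by (metis in_set_conv_nth)
      obtain j where j: "j < length L" "L!j = y" using y setL by (metis in_set_conv_nth)
      have "i \<noteq> j" using exy irr i j by auto
      then consider "i < j" | "j < i" by linarith
      then show "\<exists>i. Suc i < length L \<and> {L ! i, L ! Suc i} = {x, y}"
      proof cases
        case 1
        have si: "Suc i < length L" using 1 j by simp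
        have "L!j \<in> {w\<in>P. E (L!i) w} - set (take (Suc i) L)" 
          using exy i j y take_distinct_notin[OF dist j(1) 1] by auto
        then have "L!j = L!Suc i" using step[OF si] by auto
        then show ?thesis using i j si by (intro exI[of _ i]) auto
      next
        case 2
        have sj: "Suc j < length L" using 2 i by simp
        have "E y x" using exy sym by blast
        then have "L!i \<in> {w\<in>P. E (L!j) w} - set (take (Suc j) L)" 
          using i j x take_distinct_notin[OF dist i(1) 2] by auto
        then have "L!i = L!Suc j" using step[OF sj] by auto
        then show ?thesis using i j sj by (intro exI[of _ j]) auto
      qed
    qed
  qed
  have pp: "pendant_path V E b P" unfolding pendant_path_def
  proof (intro conjI)
    show "b \<in> V" using bV .
    show "P \<subseteq> V - {b}" using PV .
    show "\<forall>x\<in>P. \<forall>y\<in>V - {b}. E x y \<longrightarrow> y \<in> P" using clos by blast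
    show "\<exists>vs. path_order E P vs \<and> (E b (hd vs) \<or> E b (last vs))"
      using po hdL Eab sym by blast
  qed
  show ?thesis unfolding cut_edge_of_pendant_path_def
    using pp Bab ab Eab aP by blast
qed

theorem proposition3:
  fixes V :: "'a set" and E :: "'a \<Rightarrow> 'a \<Rightarrow> bool" and B S :: "'a set"
  assumes "graph V E"
    and "induced_connected E V"
    and "\<not> is_path_graph V E"
    and "is_block V E B"
    and "\<not> cut_edge_of_pendant_path V E B"
    and "connected_forcing_set V E S"
  shows "card (S \<inter> B) \<ge> min_degree E B"
proof -
  note G = assms(1) and Bb = assms(4) and nc = assms(5)
  have SV: "S \<subseteq> V" and Z: "forced V E S = V" and icS: "induced_connected E S"
    using assms(6) unfolding connected_forcing_set_def zero_forcing_set_def by auto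
  have sym: "\<forall>x y. E x y \<longrightarrow> E y x" using G unfolding graph_def by auto
  have BV: "B \<subseteq> V" and ncB: "no_cut_vertex E B" using Bb unfolding is_block_def by blast+
  have finB: "finite B" using BV G unfolding graph_def using finite_subset by blast
  have Bne: "B \<noteq> {}" using ncB unfolding no_cut_vertex_def induced_connected_def by blast
  let ?F = "forced0 V E B S"
  have A: "min_degree E B \<le> card (?F \<inter> B)" using lemA[OF G BV Bne Z] .
  have inv: "?F \<subseteq> S \<union> {x \<in> V - B. \<exists>s\<in>S - B. conn E (V - B) s x}
     \<union> {w \<in> B. \<exists>u \<in> V - B. (\<exists>s\<in>S - B. conn E (V - B) s u) \<and> E u w}"
    using lemInv[OF SV] .
  show ?thesis
  proof (cases "S \<inter> B = {}")
    case False
    then obtain b where b: "b \<in> S \<inter> B" by blast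
    have "?F \<inter> B \<subseteq> S \<inter> B"
    proof
      fix x assume x: "x \<in> ?F \<inter> B"
      then have "x \<in> S \<or> (\<exists>u \<in> V - B. (\<exists>s\<in>S - B. conn E (V - B) s u) \<and> E u x)" using inv by blast
      then show "x \<in> S \<inter> B"
      proof
        assume "x \<in> S" then show ?thesis using x by blast
      next
        assume "\<exists>u \<in> V - B. (\<exists>s\<in>S - B. conn E (V - B) s u) \<and> E u x"
        then obtain u s where us: "u \<in> V - B" "s \<in> S - B" "conn E (V - B) s u" "E u x" by blast
        have "x \<in> B" using x by blast
        then have "x \<in> S" using att_S[OF G Bb SV icS b us] by blast
        then show ?thesis using x by blast
      qed
    qed
    then have "card (?F \<inter> B) \<le> card (S \<inter> B)" using finB by (intro card_mono) auto
    then show ?thesis using A by linarith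
  next
    case True
    define At where "At = {w \<in> B. \<exists>u \<in> V - B. (\<exists>s\<in>S - B. conn E (V - B) s u) \<and> E u w}"
    have sub: "?F \<inter> B \<subseteq> At" using inv True unfolding At_def by blast
    have uq: "\<forall>x\<in>At. \<forall>y\<in>At. x = y"
    proof (intro ballI)
      fix x y assume "x \<in> At" "y \<in> At"
      then obtain u1 s1 u2 s2 where h: "u1 \<in> V - B" "s1 \<in> S" "conn E (V - B) s1 u1" "E u1 x" "x \<in> B"
         "u2 \<in> V - B" "s2 \<in> S" "conn E (V - B) s2 u2" "E u2 y" "y \<in> B" unfolding At_def by blast
      show "x = y" using att_unique[OF G Bb SV icS True h] .
    qed
    have finAt: "finite At" using finB At_def by auto
    have "card At \<le> Suc 0" using uq finAt card_le_Suc0_iff_eq by blast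
    moreover have "card (?F \<inter> B) \<le> card At" using sub finAt by (rule card_mono[rotated])
    ultimately have d: "min_degree E B \<le> 1" using A by linarith
    show ?thesis
    proof (cases "min_degree E B = 0")
      case True then show ?thesis by simp
    next
      case False
      then have d1: "min_degree E B = 1" using d by simp
      obtain a b where ab: "B = {a,b}" "a \<noteq> b" "E a b" using deg1[OF G Bb d1] by blast
      from sides[OF G Bb ab(1) ab(2) SV icS True]
      show ?thesis
      proof
        assume "S \<inter> {x \<in> V - {b}. conn E (V - {b}) a x} = {}"
        then have "cut_edge_of_pendant_path V E B" using pendant[OF G Bb ab SV Z] by blast
        then show ?thesis using nc by simp
      next
        assume h: "S \<inter> {x \<in> V - {a}. conn E (V - {a}) b x} = {}"
        have "B = {b,a}" "b \<noteq> a" "E b a" using ab sym by auto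
        then have "cut_edge_of_pendant_path V E B" using pendant[OF G Bb _ _ _ SV Z h] by blast
        then show ?thesis using nc by simp
      qed
    qed
  qed
qed

end
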